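(* For every $n\ge1$ and every $A\subseteq[n]$, the set-alternating domain $D_X(A)$ is connected: for any two orders in $D_X(A)$, the second can be obtained from the first by a sequence of transpositions of adjacent alternatives such that every intermediate order lies in $D_X(A)$.
   Context: Alternatives are $X=[n]$, with societal axis $1<\dots<n$; linear orders are written as strings, leftmost ranked highest. For $A\subseteq[n]$, $D_X(A)$ is the set of all linear orders $q$ on $[n]$ such that for every triple $i<j<k$: if $j\in A$ then $i$ is not ranked last among $\{i,j,k\}$ in $q$, and if $j\notin A$ then $k$ is not ranked first among $\{i,j,k\}$ in $q$. *)

theory Defs
  imports Main
begin

text \<open>A linear order on [n] = {1..n} is a list containing each alternative exactly once;
  the leftmost entry is ranked highest.\<close>
definition lin_orders :: "nat \<Rightarrow> nat list set" where
  "lin_orders n = {q. distinct q \<and> set q = {1..n}}"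

definition above :: "nat list \<Rightarrow> nat \<Rightarrow> nat \<Rightarrow> bool" where
  "above q x y \<longleftrightarrow> (\<exists>i j. i < j \<and> j < length q \<and> q ! i = x \<and> q ! j = y)"

definition D_X :: "nat \<Rightarrow> nat set \<Rightarrow> nat list set" where
  "D_X n A = {q \<in> lin_orders n.
     \<forall>i j k. 1 \<le> i \<and> i < j \<and> j < k \<and> k \<le> n \<longrightarrow>
       (j \<in> A \<longrightarrow> \<not> (above q j i \<and> above q k i)) \<and>
       (j \<notin> A \<longrightarrow> \<not> (above q k i \<and> above q k j))}"

definition adj_swap :: "nat list \<Rightarrow> nat list \<Rightarrow> bool" where
  "adj_swap q q' \<longleftrightarrow> (\<exists>p. Suc p < length q \<and> q' = q[p := q ! Suc p, Suc p := q ! p])"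

end

theory Submission
  imports Defs
begin

definition swp :: "nat list \<Rightarrow> nat \<Rightarrow> nat list" where
  "swp q p = q[p := q ! Suc p, Suc p := q ! p]"

definition sg :: "nat \<Rightarrow> nat \<Rightarrow> nat" where
  "sg p k = (if k = p then Suc p else if k = Suc p then p else k)"

lemma swp_nth: "Suc p < length q \<Longrightarrow> k < length q \<Longrightarrow> swp q p ! k = q ! sg p k"
  unfolding swp_def sg_def by (auto simp: nth_list_update)

lemma swp_len[simp]: "length (swp q p) = length q"
  unfolding swp_def by simp

lemma swp_swp: "Suc p < length q \<Longrightarrow> swp (swp q p) p = q"
  unfolding swp_def by (auto simp: list_eq_iff_nth_eq nth_list_update)

lemma above_swp_dir:
  assumes "Suc p < length q" "above (swp q p) x y" "\<not> (x = q ! Suc p \<and> y = q ! p)"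
  shows "above q x y"
proof -
  obtain i j where ij: "i < j" "j < length q" "swp q p ! i = x" "swp q p ! j = y"
    using assms(2) unfolding above_def by auto
  have x: "q ! sg p i = x" and y: "q ! sg p j = y" using ij assms(1) swp_nth by auto
  have "\<not> (i = p \<and> j = Suc p)" using x y assms(3) unfolding sg_def by auto
  then have "sg p i < sg p j" "sg p j < length q" using ij assms(1) unfolding sg_def by auto
  then show ?thesis unfolding above_def using x y by blast
qed

lemma above_asym:
  assumes "distinct q" "above q x y" shows "\<not> above q y x"
proof
  assume "above q y x"
  then obtain i j where "i < j" "j < length q" "q ! i = y" "q ! j = x" unfolding above_def by auto
  moreover obtain i' j' where "i' < j'" "j' < length q" "q ! i' = x" "q ! j' = y"
    using assms(2) unfolding above_def by auto
  ultimately show False using assms(1) nth_eq_iff_index_eq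
    by (metis order.strict_trans not_less_iff_gr_or_eq)
qed

lemma key:
  assumes "distinct q" "Suc p < length q" "q ! Suc p < q ! p" "v < u" "above (swp q p) u v"
  shows "above q u v"
proof (cases "u = q ! Suc p \<and> v = q ! p")
  case True then show ?thesis using assms by auto
next
  case False then show ?thesis using above_swp_dir assms by blast
qed

lemma pres:
  assumes "q \<in> D_X n A" "Suc p < length q" "q ! Suc p < q ! p"
  shows "swp q p \<in> D_X n A"
proof -
  have d: "distinct q" "set q = {1..n}" using assms(1) unfolding D_X_def lin_orders_def by auto
  have "swp q p \<in> lin_orders n" using d assms(2) unfolding lin_orders_def swp_def by simp
  moreover have "\<forall>i j k. 1 \<le> i \<and> i < j \<and> j < k \<and> k \<le> n \<longrightarrow>
       (j \<in> A \<longrightarrow> \<not> (above (swp q p) j i \<and> above (swp q p) k i)) \<and>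
       (j \<notin> A \<longrightarrow> \<not> (above (swp q p) k i \<and> above (swp q p) k j))"
  proof (intro allI impI)
    fix i j k assume h: "1 \<le> i \<and> i < j \<and> j < k \<and> k \<le> n"
    have c: "(j \<in> A \<longrightarrow> \<not> (above q j i \<and> above q k i)) \<and>
       (j \<notin> A \<longrightarrow> \<not> (above q k i \<and> above q k j))" using assms(1) h unfolding D_X_def by blast
    have "above (swp q p) j i \<Longrightarrow> above q j i" "above (swp q p) k i \<Longrightarrow> above q k i"
      "above (swp q p) k j \<Longrightarrow> above q k j"
      using key[OF d(1) assms(2,3)] h by auto
    then show "(j \<in> A \<longrightarrow> \<not> (above (swp q p) j i \<and> above (swp q p) k i)) \<and>
       (j \<notin> A \<longrightarrow> \<not> (above (swp q p) k i \<and> above (swp q p) k j))" using c by blast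
  qed
  ultimately show ?thesis unfolding D_X_def by blast
qed

definition M :: "nat list \<Rightarrow> nat" where
  "M q = (\<Sum>i<length q. i * q ! i)"

lemma M_incr:
  assumes "Suc p < length q" "q ! Suc p < q ! p"
  shows "M q < M (swp q p)"
proof -
  let ?L = "length q"
  let ?f = "\<lambda>i. i * q ! i" and ?g = "\<lambda>i. i * swp q p ! i"
  have U: "{..<?L} = ({..<?L} - {p, Suc p}) \<union> {p, Suc p}" using assms(1) by auto
  have e: "sum ?g ({..<?L} - {p, Suc p}) = sum ?f ({..<?L} - {p, Suc p})"
    by (rule sum.cong) (auto simp: swp_def)
  have "M q = sum ?f ({..<?L} - {p, Suc p}) + sum ?f {p, Suc p}"
    unfolding M_def by (subst U) (rule sum.union_disjoint, auto)
  moreover have "M (swp q p) = sum ?g ({..<?L} - {p, Suc p}) + sum ?g {p, Suc p}"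
    unfolding M_def swp_len by (subst U) (rule sum.union_disjoint, auto)
  moreover have "sum ?f {p, Suc p} < sum ?g {p, Suc p}"
  proof -
    have "sum ?f {p, Suc p} = p * q!p + Suc p * q ! Suc p" by simp
    moreover have "sum ?g {p, Suc p} = p * q!Suc p + Suc p * q ! p"
      using assms(1) by (simp add: swp_def nth_list_update)
    moreover have "p * q!p + Suc p * q ! Suc p < p * q!Suc p + Suc p * q ! p"
      using assms(2) by (simp add: algebra_simps)
    ultimately show ?thesis by simp
  qed
  ultimately show ?thesis using e by simp
qed

lemma M_bound:
  assumes "q \<in> lin_orders n" shows "M q \<le> n * n * n"
proof -
  have d: "distinct q" "set q = {1..n}" using assms unfolding lin_orders_def by auto
  then have L: "length q = n" by (metis card_atLeastAtMost diff_Suc_1 distinct_card)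
  have "M q \<le> (\<Sum>i<n. n * n)" unfolding M_def L
  proof (rule sum_mono)
    fix i assume "i \<in> {..<n}"
    then have "q ! i \<in> {1..n}" using d L by (metis lessThan_iff nth_mem)
    then show "i * q ! i \<le> n * n" using \<open>i \<in> {..<n}\<close> by (simp add: mult_le_mono)
  qed
  then show ?thesis by simp
qed

lemma to_sorted:
  assumes "q \<in> D_X n A"
  shows "(\<lambda>q q'. adj_swap q q' \<and> q \<in> D_X n A \<and> q' \<in> D_X n A)\<^sup>*\<^sup>* q [1..<Suc n] \<and>
         (\<lambda>q q'. adj_swap q q' \<and> q \<in> D_X n A \<and> q' \<in> D_X n A)\<^sup>*\<^sup>* [1..<Suc n] q"
  using assms
proof (induction "n * n * n - M q" arbitrary: q rule: less_induct)
  case less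
  let ?R = "\<lambda>q q'. adj_swap q q' \<and> q \<in> D_X n A \<and> q' \<in> D_X n A"
  have lo: "q \<in> lin_orders n" using less.prems unfolding D_X_def by auto
  show ?case
  proof (cases "\<exists>p. Suc p < length q \<and> q ! Suc p < q ! p")
    case True
    then obtain p where p: "Suc p < length q" "q ! Suc p < q ! p" by blast
    have D': "swp q p \<in> D_X n A" using pres less.prems p by blast
    have lo': "swp q p \<in> lin_orders n" using D' unfolding D_X_def by auto
    have "M q < M (swp q p)" using M_incr p by blast
    moreover have "M (swp q p) \<le> n * n * n" using M_bound lo' by blast
    ultimately have "n * n * n - M (swp q p) < n * n * n - M q" by linarith
    then have IH: "?R\<^sup>*\<^sup>* (swp q p) [1..<Suc n] \<and> ?R\<^sup>*\<^sup>* [1..<Suc n] (swp q p)"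
      using less.hyps D' by blast
    have a1: "adj_swap q (swp q p)" unfolding adj_swap_def swp_def using p by blast
    have a2: "adj_swap (swp q p) q" unfolding adj_swap_def
      using p swp_swp[OF p(1)] by (metis swp_def swp_len)
    have r1: "?R q (swp q p)" and r2: "?R (swp q p) q" using a1 a2 D' less.prems by auto
    have g1: "?R\<^sup>*\<^sup>* q [1..<Suc n]"
      using IH r1 by (rule_tac converse_rtranclp_into_rtranclp[of ?R q "swp q p"]) auto
    have g2: "?R\<^sup>*\<^sup>* [1..<Suc n] q"
      using IH r2 by (rule_tac rtranclp.rtrancl_into_rtrancl[of ?R _ "swp q p"]) auto
    show ?thesis using g1 g2 by blast
  next
    case False
    have "sorted q" unfolding sorted_iff_nth_Suc using False by (metis not_less)
    moreover have "distinct q" "set q = {1..n}" using lo unfolding lin_orders_def by auto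
    ultimately have "q = [1..<Suc n]"
      by (metis atLeastLessThanSuc_atLeastAtMost distinct_upt set_upt sorted_distinct_set_unique sorted_upt)
    then show ?thesis by simp
  qed
qed

theorem proposition2:
  fixes n :: nat and A :: "nat set" and q1 q2 :: "nat list"
  assumes "n \<ge> 1" and "A \<subseteq> {1..n}"
    and "q1 \<in> D_X n A" and "q2 \<in> D_X n A"
  shows "(\<lambda>q q'. adj_swap q q' \<and> q \<in> D_X n A \<and> q' \<in> D_X n A)\<^sup>*\<^sup>* q1 q2"
  using to_sorted[OF assms(3)] to_sorted[OF assms(4)] by (meson rtranclp_trans)

end
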